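(* Let $S$ be a numerical semigroup and $m\in\mathbb{N}$, and suppose the set of gaps $\mathrm{H}(S)$ is equidistributed modulo $m$. Then $m\in S$ if and only if $\mathrm{g}(S)=0$.
   Context: A numerical semigroup is a submonoid $S$ of $(\mathbb{N}_0,+)$ with finite complement; $\mathrm{H}(S)=\mathbb{N}_0\setminus S$ is its set of gaps and $\mathrm{g}(S)=\#\mathrm{H}(S)$ its genus. A finite set $B\subset\mathbb{Z}$ is equidistributed modulo $m$ if for all $r_1,r_2\in\{1,\dots,m\}$ the number of elements of $B$ congruent to $r_1$ modulo $m$ equals the number of elements of $B$ congruent to $r_2$ modulo $m$. *)

theory Defs
  imports Main
begin

definition numerical_semigroup :: "nat set \<Rightarrow> bool" where
  "numerical_semigroup S \<longleftrightarrow>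
     0 \<in> S \<and> (\<forall>a\<in>S. \<forall>b\<in>S. a + b \<in> S) \<and> finite (UNIV - S)"

definition gaps :: "nat set \<Rightarrow> nat set" where
  "gaps S = UNIV - S"

definition genus :: "nat set \<Rightarrow> nat" where
  "genus S = card (gaps S)"

definition equidistributed_mod :: "int set \<Rightarrow> int \<Rightarrow> bool" where
  "equidistributed_mod B m \<longleftrightarrow> finite B \<and>
     (\<forall>r1\<in>{1..m}. \<forall>r2\<in>{1..m}.
        card {b\<in>B. b mod m = r1 mod m} = card {b\<in>B. b mod m = r2 mod m})"

end

theory Submission
  imports Defs
begin

lemma mult_in:
  assumes "numerical_semigroup S" "m \<in> S"
  shows "k * m \<in> S"
  using assms by (induction k) (auto simp: numerical_semigroup_def)

theorem mainTheorem2: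
  fixes S :: "nat set" and m :: nat
  assumes "numerical_semigroup S"
    and "m \<ge> 1"
    and "equidistributed_mod (int ` gaps S) (int m)"
  shows "m \<in> S \<longleftrightarrow> genus S = 0"
proof
  assume g: "genus S = 0"
  have "finite (gaps S)" using assms(1) by (simp add: numerical_semigroup_def gaps_def)
  with g have "gaps S = {}" by (simp add: genus_def)
  then show "m \<in> S" by (auto simp: gaps_def)
next
  assume mS: "m \<in> S"
  let ?B = "int ` gaps S"
  have fin: "finite ?B" using assms(3) by (simp add: equidistributed_mod_def)
  have "gaps S = {}"
  proof (rule ccontr)
    assume "gaps S \<noteq> {}"
    then obtain g where gg: "g \<in> gaps S" by auto
    define r where "r = (if int g mod int m = 0 then int m else int g mod int m)"
    have b1: "int g mod int m < int m" "0 \<le> int g mod int m" using assms(2) by simp_all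
    have r1: "r \<in> {1..int m}" using assms(2) b1 unfolding r_def by auto
    have rm: "r mod int m = int g mod int m" using assms(2) by (auto simp: r_def)
    have mm: "int m \<in> {1..int m}" using assms(2) by auto
    have eq: "card {b\<in>?B. b mod int m = r mod int m} = card {b\<in>?B. b mod int m = int m mod int m}"
      using assms(3) r1 mm unfolding equidistributed_mod_def by blast
    have empty: "{b\<in>?B. b mod int m = int m mod int m} = {}"
    proof (safe)
      fix x assume x: "x \<in> gaps S" "int x mod int m = int m mod int m"
      then have "int m dvd int x" by (simp add: mod_eq_0_iff_dvd)
      then have "m dvd x" by simp
      then obtain k where "x = k * m" by (metis dvdE mult.commute)
      with mult_in[OF assms(1) mS] x(1) show "int x \<in> {}" by (auto simp: gaps_def)
    qed
    have "int g \<in> {b\<in>?B. b mod int m = r mod int m}" using gg rm by auto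
    moreover have "finite {b\<in>?B. b mod int m = r mod int m}" using fin by auto
    ultimately have "card {b\<in>?B. b mod int m = r mod int m} > 0"
      using card_gt_0_iff by blast
    with eq empty show False by (metis card.empty less_irrefl)
  qed
  then show "genus S = 0" by (simp add: genus_def)
qed

end
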